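(* Let $d,D\in\mathbb{N}_+$, $L\ge0$, and let $f=(f_1,\dots,f_D):\mathbb{R}^d\to\mathbb{R}^D$ be $L$-Lipschitz. There is a constant $C>0$ such that for every $n\in\mathbb{N}_+$ and each $i\in\{1,\dots,D\}$ there exist ReLU MLP vector fields $\Phi_i:\mathbb{R}^{d+1}\to\mathbb{R}^{d+1}$, with associated ReLU neural ODEs $\Psi_i=\mathrm{Flow}(\Phi_i):\mathbb{R}^{d+1}\to\mathbb{R}^{d+1}$, such that the map $\Psi:\mathbb{R}^d\to\mathbb{R}^D$, $\Psi(x)=\big(\pi\circ\Psi_1\circ\iota(x),\dots,\pi\circ\Psi_D\circ\iota(x)\big)$, satisfies $$\max_{1\le j\le D}\ \sup_{x\in[0,1]^d}|f_j(x)-\Psi_j(x)|\le \frac{C}{n}.$$ Moreover $\Psi$ is Lipschitz, and each $\Phi_i$ has width $\mathcal{O}(d\,n^{d+1})$, depth $\mathcal{O}(\log_2 d)$, and $\mathcal{O}(d\,n^{d+1})$ non-zero parameters.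
   Context: $\iota:\mathbb{R}^d\to\mathbb{R}^{d+1}$ is the linear embedding $x\mapsto(x,0)$ and $\pi:\mathbb{R}^{d+1}\to\mathbb{R}$ is the projection onto the last coordinate, $(x,y)\mapsto y$. A ReLU MLP is a map $\Phi(z)=W^{(\Delta)}z^{(\Delta)}+b^{(\Delta)}$, $z^{(l+1)}=\max(0,W^{(l)}z^{(l)}+b^{(l)})$ (componentwise), $z^{(1)}=z$. For a Lipschitz vector field $V$ on $\mathbb{R}^{d+1}$, $\mathrm{Flow}(V)$ is the time-$1$ map $z\mapsto z_1^z$ of $\dot z_t=V(z_t)$, $z_0=z$. The constant $C$ and the implicit constants in $\mathcal{O}$ are independent of $n$. *)

theory Defs
  imports "HOL-Analysis.Analysis"
begin

text \<open>A fixed enumeration of the (orthonormal) basis of a Euclidean space, used to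
  identify a Euclidean space of dimension k with coordinate vectors in R^k.\<close>
definition basis_enum :: "nat \<Rightarrow> 'v::euclidean_space" where
  "basis_enum = (SOME e. bij_betw e {..<DIM('v)} Basis)"

definition to_coords :: "'v::euclidean_space \<Rightarrow> (nat \<Rightarrow> real)" where
  "to_coords z = (\<lambda>j. if j < DIM('v) then z \<bullet> basis_enum j else 0)"

definition from_coords :: "(nat \<Rightarrow> real) \<Rightarrow> 'v::euclidean_space" where
  "from_coords v = (\<Sum>j<DIM('v). v j *\<^sub>R basis_enum j)"

text \<open>One affine layer: weights W (row i, column j) and bias b, input dimension N.\<close>
type_synonym layer = "(nat \<Rightarrow> nat \<Rightarrow> real) \<times> (nat \<Rightarrow> real)"

definition affine :: "nat \<Rightarrow> layer \<Rightarrow> (nat \<Rightarrow> real) \<Rightarrow> (nat \<Rightarrow> real)" where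
  "affine N Lay z = (\<lambda>i. (\<Sum>j<N. fst Lay i j * z j) + snd Lay i)"

definition relu :: "(nat \<Rightarrow> real) \<Rightarrow> (nat \<Rightarrow> real)" where
  "relu z = (\<lambda>i. max 0 (z i))"

text \<open>Evaluation: dims = [N_1, ..., N_{Delta+1}] (layer dimensions), layers = affine maps
  W^(1),...,W^(Delta); ReLU after every affine map except the last.\<close>
fun mlp_eval :: "nat list \<Rightarrow> layer list \<Rightarrow> (nat \<Rightarrow> real) \<Rightarrow> (nat \<Rightarrow> real)" where
  "mlp_eval (N # Ns) [Lay] z = affine N Lay z"
| "mlp_eval (N # Ns) (Lay # Lay' # Lays) z = mlp_eval Ns (Lay' # Lays) (relu (affine N Lay z))"
| "mlp_eval _ _ z = z"

definition relu_mlp_arch :: "'v::euclidean_space itself \<Rightarrow> nat list \<Rightarrow> layer list \<Rightarrow> bool" where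
  "relu_mlp_arch _ dims layers \<longleftrightarrow> layers \<noteq> [] \<and> length dims = length layers + 1
     \<and> hd dims = DIM('v) \<and> last dims = DIM('v)"

definition mlp_fun :: "nat list \<Rightarrow> layer list \<Rightarrow> 'v::euclidean_space \<Rightarrow> 'v" where
  "mlp_fun dims layers z = from_coords (mlp_eval dims layers (to_coords z))"

definition mlp_width :: "nat list \<Rightarrow> nat" where
  "mlp_width dims = Max (set dims)"

definition mlp_depth :: "layer list \<Rightarrow> nat" where
  "mlp_depth layers = length layers"

definition mlp_nnz :: "nat list \<Rightarrow> layer list \<Rightarrow> nat" where
  "mlp_nnz dims layers = (\<Sum>l<length layers.
      card {(i, j). i < dims ! (l+1) \<and> j < dims ! l \<and> fst (layers ! l) i j \<noteq> 0}
    + card {i. i < dims ! (l+1) \<and> snd (layers ! l) i \<noteq> 0})"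

text \<open>Time-1 flow map of the ODE z' = V(z), z(0) = z (well-defined for Lipschitz V).\<close>
definition flow :: "('v::real_normed_vector \<Rightarrow> 'v) \<Rightarrow> 'v \<Rightarrow> 'v" where
  "flow V z = (THE y. \<exists>\<gamma>. \<gamma> 0 = z \<and>
      (\<forall>t\<in>{0..1}. (\<gamma> has_vector_derivative V (\<gamma> t)) (at t within {0..1})) \<and> \<gamma> 1 = y)"

definition iota :: "'a \<Rightarrow> 'a \<times> real" where "iota x = (x, 0)"
definition proj_last :: "'a \<times> real \<Rightarrow> real" where "proj_last z = snd z"

definition unit_cube :: "(real^'n) set" where
  "unit_cube = {x. \<forall>i. 0 \<le> x $ i \<and> x $ i \<le> 1}"

end

theory Submission
  imports Defs
begin

lemma basis_enum_bij: "bij_betw (basis_enum :: nat \<Rightarrow> 'v::euclidean_space) {..<DIM('v)} Basis"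
proof -
  obtain h where "bij_betw h {0..<card (Basis::'v set)} (Basis::'v set)"
    using ex_bij_betw_nat_finite[of "Basis::'v set"] by auto
  then have "\<exists>e. bij_betw e {..<DIM('v)} (Basis::'v set)" by (auto simp: atLeast0LessThan)
  then show ?thesis unfolding basis_enum_def by (rule someI_ex)
qed

definition enc :: "'a set \<Rightarrow> nat \<Rightarrow> 'a" where
  "enc S = (SOME e. bij_betw e {..<card S} S)"

lemma enc_bij: "finite S \<Longrightarrow> bij_betw (enc S) {..<card S} S"
proof -
  assume "finite S"
  then obtain h where "bij_betw h {0..<card S} S"
    using ex_bij_betw_nat_finite by auto
  then have "\<exists>e. bij_betw e {..<card S} S" by (auto simp: atLeast0LessThan)
  then show ?thesis unfolding enc_def by (rule someI_ex)
qed

definition mkL :: "(nat \<Rightarrow> 'b) \<Rightarrow> (nat \<Rightarrow> 'a) \<Rightarrow> ('b \<Rightarrow> 'a \<Rightarrow> real) \<Rightarrow> ('b \<Rightarrow> real) \<Rightarrow> layer" where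
  "mkL eT eS w b = ((\<lambda>i j. w (eT i) (eS j)), (\<lambda>i. b (eT i)))"

lemma affine_mkL:
  assumes "bij_betw eS {..<NS} S" "\<And>j. j < NS \<Longrightarrow> z j = v (eS j)"
  shows "affine NS (mkL eT eS w b) z i = (\<Sum>s\<in>S. w (eT i) s * v s) + b (eT i)"
proof -
  have "(\<Sum>j<NS. w (eT i) (eS j) * z j) = (\<Sum>j<NS. w (eT i) (eS j) * v (eS j))"
    using assms(2) by simp
  also have "\<dots> = (\<Sum>s\<in>S. w (eT i) s * v s)"
    using sum.reindex_bij_betw[OF assms(1), of "\<lambda>s. w (eT i) s * v s"] by simp
  finally show ?thesis unfolding affine_def mkL_def by simp
qed

lemma mlp_eval_cons: "Lays \<noteq> [] \<Longrightarrow> mlp_eval (N # Ns) (Lay # Lays) z = mlp_eval Ns Lays (relu (affine N Lay z))"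
  by (cases Lays) auto

lemma nnz_le: "mlp_nnz dims layers \<le> (\<Sum>l<length layers. dims ! (l+1) * dims ! l + dims ! (l+1))"
  unfolding mlp_nnz_def
proof (rule sum_mono)
  fix l
  have "card {(i, j). i < dims ! (l+1) \<and> j < dims ! l \<and> fst (layers ! l) i j \<noteq> 0} \<le> card ({..<dims ! (l+1)} \<times> {..<dims ! l})"
    by (rule card_mono) auto
  moreover have "card {i. i < dims ! (l+1) \<and> snd (layers ! l) i \<noteq> 0} \<le> card {..<dims ! (l+1)}"
    by (rule card_mono) auto
  ultimately show "card {(i, j). i < dims ! (l+1) \<and> j < dims ! l \<and> fst (layers ! l) i j \<noteq> 0} + card {i. i < dims ! (l+1) \<and> snd (layers ! l) i \<noteq> 0} \<le> dims ! (l+1) * dims ! l + dims ! (l+1)"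
    by (simp add: card_cartesian_product)
qed


definition chainW :: "nat \<Rightarrow> nat \<Rightarrow> nat \<Rightarrow> real" where
 "chainW c i j = (if i = 0 then (if j = 0 then 1 else 0) + (if j = 1 then 1 else 0)
    else if i = 1 then (if j = c + 2 then 1 else 0) - (if j = 0 then 1 else 0) - (if j = 1 then 1 else 0)
    else if j = i then 1 else 0)"

definition chainL :: "nat \<Rightarrow> layer" where "chainL c = mkL id id (chainW c) (\<lambda>_. 0)"

fun Mx :: "(nat \<Rightarrow> real) \<Rightarrow> nat \<Rightarrow> real" where
  "Mx Sv 0 = Sv 0"
| "Mx Sv (Suc c) = max (Mx Sv c) (Sv (Suc c))"

definition cinv :: "nat \<Rightarrow> (nat \<Rightarrow> real) \<Rightarrow> nat \<Rightarrow> (nat \<Rightarrow> real) \<Rightarrow> bool" where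
  "cinv Nc Sv c w \<longleftrightarrow> w 0 \<ge> 0 \<and> w 1 \<ge> 0 \<and> w 0 + w 1 = Mx Sv c \<and> (\<forall>j<Nc. w (j+2) = Sv j)"

lemma Mx_nonneg: "(\<forall>j. Sv j \<ge> 0) \<Longrightarrow> Mx Sv c \<ge> 0"
  by (induction c) auto

lemma sum_delta_mult: "(\<Sum>j<(K::nat). (if j = a then 1 else 0) * (w j::real)) = (if a < K then w a else 0)"
proof -
  have "(\<Sum>j<K. (if j = a then 1 else 0) * (w j::real)) = (\<Sum>j<K. (if j = a then w j else 0))"
    by (rule sum.cong) auto
  also have "\<dots> = (if a < K then w a else 0)"
    by (subst sum.delta) auto
  finally show ?thesis .
qed
lemma sum_delta2: "2 \<le> (K::nat) \<Longrightarrow> (\<Sum>j<K. ((if j = 0 then 1 else 0) + (if j = 1 then 1 else 0)) * (w j::real)) = w 0 + w 1"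
  by (simp only: distrib_right sum.distrib sum_delta_mult) simp
lemma sum_delta2': "2 \<le> (K::nat) \<Longrightarrow> (\<Sum>j<K. ((if j = 0 then 1 else 0) + (if j = Suc 0 then 1 else 0)) * (w j::real)) = w 0 + w 1"
  using sum_delta2 by simp

lemma affine_chainL: "affine (Nc+2) (chainL c) w i = (\<Sum>j<Nc+2. chainW c i j * w j)"
  unfolding chainL_def by (subst affine_mkL[of id _ "{..<Nc+2}" _ w]) auto

lemma chain_step:
  assumes "c + 1 < Nc" "cinv Nc Sv c w" "\<forall>j. Sv j \<ge> 0"
  shows "cinv Nc Sv (c+1) (relu (affine (Nc+2) (chainL (c+1)) w))"
proof -
  let ?w' = "relu (affine (Nc+2) (chainL (c+1)) w)"
  have a0: "affine (Nc+2) (chainL (c+1)) w 0 = w 0 + w 1"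
    unfolding affine_chainL chainW_def by (simp add: sum_delta2')
  have a1: "affine (Nc+2) (chainL (c+1)) w 1 = w (c+1+2) - w 0 - w 1"
    using assms(1) unfolding affine_chainL chainW_def
    by (simp del: One_nat_def add: left_diff_distrib sum_subtractf sum_delta_mult)
  have a2: "affine (Nc+2) (chainL (c+1)) w (j+2) = w (j+2)" if "j < Nc" for j
    using that unfolding affine_chainL chainW_def
    by (simp add: sum_delta_mult)
  have m: "Mx Sv c \<ge> 0" using Mx_nonneg assms(3) by blast
  have "?w' 0 = Mx Sv c" using a0 assms(2) m unfolding relu_def cinv_def by simp
  moreover have "?w' 1 = max 0 (Sv (c+1) - Mx Sv c)" using a1 assms(1,2) unfolding relu_def cinv_def
    by (simp add: diff_diff_eq)
  moreover have "\<forall>j<Nc. ?w' (j+2) = Sv j" using a2 assms(2,3) unfolding relu_def cinv_def by simp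
  ultimately show ?thesis unfolding cinv_def by (auto simp: relu_def)
qed

definition finW :: "'v \<Rightarrow> 'v \<Rightarrow> nat \<Rightarrow> real" where
  "finW e b j = (if b = e then (if j = 0 then 1 else 0) + (if j = 1 then 1 else 0) else 0)"

definition finL :: "'v::euclidean_space \<Rightarrow> real \<Rightarrow> layer" where
  "finL e A = mkL basis_enum id (finW e) (\<lambda>b. if b = e then - A else 0)"

lemma affine_finL: "2 \<le> K \<Longrightarrow> affine K (finL e A) w i = (if basis_enum i = e then w 0 + w 1 - A else 0)"
proof -
  assume K: "2 \<le> K"
  have "affine K (finL e A) w i = (\<Sum>j<K. finW e (basis_enum i) j * w j) + (if basis_enum i = e then -A else 0)"
    unfolding finL_def by (subst affine_mkL[of id _ "{..<K}" _ w]) auto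
  moreover have "(\<Sum>j<K. finW e e j * w j) = w 0 + w 1"
    unfolding finW_def using sum_delta2[OF K, of w] by simp
  ultimately show ?thesis by (auto simp: finW_def)
qed

lemma chain_tail:
  fixes e :: "'v::euclidean_space"
  assumes "\<forall>j. Sv j \<ge> 0"
  shows "\<forall>c w. c + k + 1 = Nc \<longrightarrow> cinv Nc Sv c w \<longrightarrow>
     (\<forall>i. mlp_eval (replicate (k+1) (Nc+2) @ [DIM('v)]) (map chainL [c+1..<Nc] @ [finL e A]) w i
        = (if basis_enum i = e then Mx Sv (Nc - 1) - A else 0))"
proof (induction k)
  case 0
  show ?case by (auto simp: affine_finL cinv_def)
next
  case (Suc k)
  show ?case
  proof (intro allI impI)
    fix c w i assume h: "c + Suc k + 1 = Nc" "cinv Nc Sv c w"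
    have ups: "[c+1..<Nc] = (c+1) # [c+1+1..<Nc]" using h(1) by (simp add: upt_conv_Cons)
    have "mlp_eval (replicate (Suc k+1) (Nc+2) @ [DIM('v)]) (map chainL [c+1..<Nc] @ [finL e A]) w i
       = mlp_eval (replicate (k+1) (Nc+2) @ [DIM('v)]) (map chainL [c+1+1..<Nc] @ [finL e A]) (relu (affine (Nc+2) (chainL (c+1)) w)) i"
      unfolding ups by (simp add: mlp_eval_cons)
    also have "\<dots> = (if basis_enum i = e then Mx Sv (Nc - 1) - A else 0)"
      using Suc.IH[rule_format, of "c+1" "relu (affine (Nc+2) (chainL (c+1)) w)"] h chain_step[OF _ h(2) assms]
      by simp
    finally show "mlp_eval (replicate (Suc k+1) (Nc+2) @ [DIM('v)]) (map chainL [c+1..<Nc] @ [finL e A]) w i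
        = (if basis_enum i = e then Mx Sv (Nc - 1) - A else 0)" .
  qed
qed

definition gridS :: "nat \<Rightarrow> ('n::finite \<Rightarrow> nat) set" where "gridS n = PiE UNIV (\<lambda>_::'n. {..n})"
definition SA :: "nat \<Rightarrow> ('n::finite \<times> nat \<times> bool) set" where "SA n = UNIV \<times> {..n} \<times> UNIV"
definition SBs :: "nat \<Rightarrow> (('n::finite \<Rightarrow> nat) \<times> nat) set" where "SBs n = gridS n \<times> {..<3}"
definition gp :: "nat \<Rightarrow> ('n::finite \<Rightarrow> nat) \<Rightarrow> real^'n" where "gp n p = (\<chi> i. real (p i) / real n)"
definition rhoN :: "nat \<Rightarrow> nat \<Rightarrow> real" where "rhoN n d = real d / real n"

definition aval :: "nat \<Rightarrow> real^'n \<Rightarrow> 'n \<times> nat \<times> bool \<Rightarrow> real" where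
  "aval n x = (\<lambda>(i,k,s). max 0 (if s then x $ i - real k / real n else real k / real n - x $ i))"
definition wA :: "'n \<times> nat \<times> bool \<Rightarrow> (real^'n) \<times> real \<Rightarrow> real" where
  "wA = (\<lambda>(i,k,s) b. if b = (axis i 1, 0) then (if s then 1 else -1) else 0)"
definition bA :: "nat \<Rightarrow> 'n \<times> nat \<times> bool \<Rightarrow> real" where
  "bA n = (\<lambda>(i,k,s). if s then - (real k / real n) else real k / real n)"
definition LA :: "'n::finite itself \<Rightarrow> nat \<Rightarrow> layer" where
  "LA _ n = mkL (enc (SA n :: ('n \<times> nat \<times> bool) set)) basis_enum wA (bA n)"

lemma eval_A:
  fixes z :: "(real^'n::finite) \<times> real"
  assumes "j < card (SA n :: ('n \<times> nat \<times> bool) set)"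
  shows "relu (affine DIM((real^'n) \<times> real) (LA TYPE('n) n) (to_coords z)) j = aval n (fst z) (enc (SA n) j)"
proof -
  obtain i k s where c: "enc (SA n :: ('n \<times> nat \<times> bool) set) j = (i,k,s)" by (metis prod_cases3)
  have inB: "(axis i 1, 0::real) \<in> (Basis :: ((real^'n) \<times> real) set)"
    by (simp add: Basis_prod_def)
  have "affine DIM((real^'n) \<times> real) (LA TYPE('n) n) (to_coords z) j
      = (\<Sum>b\<in>Basis. wA (i,k,s) b * (z \<bullet> b)) + bA n (i,k,s)"
    unfolding LA_def using c
    by (subst affine_mkL[OF basis_enum_bij, where v = "\<lambda>b. z \<bullet> b"]) (auto simp: to_coords_def)
  also have "(\<Sum>b\<in>Basis. wA (i,k,s) b * (z \<bullet> b)) = (if s then 1 else -1) * (z \<bullet> (axis i 1, 0))"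
  proof -
    have "(\<Sum>b\<in>Basis. wA (i,k,s) b * (z \<bullet> b)) = (\<Sum>b\<in>(Basis :: ((real^'n) \<times> real) set). if b = (axis i 1, 0) then (if s then 1 else -1) * (z \<bullet> b) else 0)"
      by (rule sum.cong) (auto simp: wA_def)
    also have "\<dots> = (if s then 1 else -1) * (z \<bullet> (axis i 1, 0))"
      using inB by (subst sum.delta) auto
    finally show ?thesis .
  qed
  also have "z \<bullet> (axis i 1, 0) = fst z $ i"
    by (cases z) (simp add: inner_axis)
  finally show ?thesis using c by (auto simp: relu_def aval_def bA_def)
qed

definition Tsum :: "nat \<Rightarrow> real^'n \<Rightarrow> ('n::finite \<Rightarrow> nat) \<Rightarrow> real" where
  "Tsum n x p = (\<Sum>i\<in>UNIV. aval n x (i, p i, True) + aval n x (i, p i, False))"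
definition uval :: "nat \<Rightarrow> real^'n \<Rightarrow> ('n::finite \<Rightarrow> nat) \<times> nat \<Rightarrow> real" where
  "uval n x = (\<lambda>(p,k). max 0 (Tsum n x p - real k * rhoN n CARD('n)))"
definition wB :: "('n \<Rightarrow> nat) \<times> nat \<Rightarrow> 'n \<times> nat \<times> bool \<Rightarrow> real" where
  "wB = (\<lambda>(p,k) (i,k',s). if k' = p i then 1 else 0)"
definition bB :: "nat \<Rightarrow> ('n::finite \<Rightarrow> nat) \<times> nat \<Rightarrow> real" where
  "bB n = (\<lambda>(p,k). - real k * rhoN n CARD('n))"
definition LB :: "'n::finite itself \<Rightarrow> nat \<Rightarrow> layer" where
  "LB _ n = mkL (enc (SBs n :: (('n \<Rightarrow> nat) \<times> nat) set)) (enc (SA n :: ('n \<times> nat \<times> bool) set)) wB (bB n)"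

lemma finite_gridS: "finite (gridS n)" unfolding gridS_def by (simp add: finite_PiE)
lemma finite_SA: "finite (SA n)" unfolding SA_def by simp
lemma finite_SBs: "finite (SBs n :: (('n::finite \<Rightarrow> nat) \<times> nat) set)"
  unfolding SBs_def by (rule finite_cartesian_product[OF finite_gridS]) simp
lemma gridS_iff: "p \<in> gridS n \<longleftrightarrow> (\<forall>i. p i \<le> n)" unfolding gridS_def by (auto simp: PiE_iff)

lemma sum_wB:
  fixes x :: "real^'n::finite" and p :: "'n \<Rightarrow> nat"
  assumes "p \<in> gridS n"
  shows "(\<Sum>c\<in>SA n. wB (p,k) c * aval n x c) = Tsum n x p"
proof -
  have "(\<Sum>c\<in>SA n. wB (p,k) c * aval n x c) = (\<Sum>i\<in>UNIV. \<Sum>k'\<in>{..n}. \<Sum>s\<in>UNIV. wB (p,k) (i,k',s) * aval n x (i,k',s))"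
    unfolding SA_def by (simp add: sum.cartesian_product)
  also have "\<dots> = (\<Sum>i\<in>UNIV. \<Sum>k'\<in>{..n}. if k' = p i then aval n x (i,p i,True) + aval n x (i,p i,False) else 0)"
    by (rule sum.cong[OF refl], rule sum.cong[OF refl]) (auto simp: wB_def UNIV_bool)
  also have "\<dots> = Tsum n x p"
    using assms unfolding Tsum_def gridS_iff by (simp add: sum.delta')
  finally show ?thesis .
qed

lemma eval_B:
  fixes x :: "real^'n::finite"
  assumes "j < card (SBs n :: (('n \<Rightarrow> nat) \<times> nat) set)"
    and "\<And>j. j < card (SA n :: ('n \<times> nat \<times> bool) set) \<Longrightarrow> zA j = aval n x (enc (SA n) j)"
  shows "relu (affine (card (SA n :: ('n \<times> nat \<times> bool) set)) (LB TYPE('n) n) zA) j = uval n x (enc (SBs n) j)"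
proof -
  obtain p k where c: "enc (SBs n :: (('n::finite \<Rightarrow> nat) \<times> nat) set) j = (p,k)" by fastforce
  have "enc (SBs n :: (('n::finite \<Rightarrow> nat) \<times> nat) set) j \<in> SBs n"
    using enc_bij[OF finite_SBs] assms(1) by (auto simp: bij_betw_def)
  then have pg: "p \<in> gridS n" using c by (auto simp: SBs_def)
  have "affine (card (SA n :: ('n \<times> nat \<times> bool) set)) (LB TYPE('n) n) zA j
      = (\<Sum>c\<in>SA n. wB (p,k) c * aval n x c) + bB n (p,k)"
    unfolding LB_def using c
    by (subst affine_mkL[OF enc_bij[OF finite_SA], where v = "aval n x"]) (auto simp: assms(2))
  then show ?thesis using c sum_wB[OF pg] by (simp add: relu_def uval_def bB_def)
qed

definition alpha :: "(real^'n \<Rightarrow> real) \<Rightarrow> real \<Rightarrow> nat \<Rightarrow> ('n::finite \<Rightarrow> nat) \<Rightarrow> real" where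
  "alpha F A n p = A + F (gp n p)"
definition coefk :: "real \<Rightarrow> real \<Rightarrow> real \<Rightarrow> nat \<Rightarrow> real" where
  "coefk L \<rho> a k = (if k = 0 then -L else if k = 1 then L - (a - L*\<rho>)/\<rho> else (a - L*\<rho>)/\<rho>)"
definition cls :: "nat \<Rightarrow> ('n \<Rightarrow> nat) \<Rightarrow> ('n \<Rightarrow> nat)" where "cls m p = (\<lambda>i. p i mod m)"
definition wCrow :: "(real^'n \<Rightarrow> real) \<Rightarrow> real \<Rightarrow> real \<Rightarrow> nat \<Rightarrow> nat \<Rightarrow> ('n::finite \<Rightarrow> nat) \<Rightarrow> ('n \<Rightarrow> nat) \<times> nat \<Rightarrow> real" where
  "wCrow F L A n m r = (\<lambda>(p,k). if cls m p = r then coefk L (rhoN n CARD('n)) (alpha F A n p) k else 0)"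
definition bCrow :: "(real^'n \<Rightarrow> real) \<Rightarrow> real \<Rightarrow> nat \<Rightarrow> nat \<Rightarrow> ('n::finite \<Rightarrow> nat) \<Rightarrow> real" where
  "bCrow F A n m r = (\<Sum>p\<in>gridS n. if cls m p = r then alpha F A n p else 0)"
definition Sraw :: "(real^'n \<Rightarrow> real) \<Rightarrow> real \<Rightarrow> real \<Rightarrow> nat \<Rightarrow> nat \<Rightarrow> real^'n \<Rightarrow> ('n::finite \<Rightarrow> nat) \<Rightarrow> real" where
  "Sraw F L A n m x r = (\<Sum>s\<in>SBs n. wCrow F L A n m r s * uval n x s) + bCrow F A n m r"
definition rowof :: "nat \<Rightarrow> nat" where "rowof i = (if i = 0 then 0 else i - 2)"
definition LC :: "'n::finite itself \<Rightarrow> (real^'n \<Rightarrow> real) \<Rightarrow> real \<Rightarrow> real \<Rightarrow> nat \<Rightarrow> nat \<Rightarrow> (nat \<Rightarrow> ('n \<Rightarrow> nat)) \<Rightarrow> layer" where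
  "LC _ F L A n m eR = mkL id (enc (SBs n :: (('n \<Rightarrow> nat) \<times> nat) set))
     (\<lambda>i s. if i = 1 then 0 else wCrow F L A n m (eR (rowof i)) s)
     (\<lambda>i. if i = 1 then 0 else bCrow F A n m (eR (rowof i)))"

lemma eval_C:
  fixes x :: "real^'n::finite"
  assumes "\<And>j. j < card (SBs n :: (('n \<Rightarrow> nat) \<times> nat) set) \<Longrightarrow> zB j = uval n x (enc (SBs n) j)"
  shows "relu (affine (card (SBs n :: (('n \<Rightarrow> nat) \<times> nat) set)) (LC TYPE('n) F L A n m eR) zB) i
     = (if i = 1 then 0 else max 0 (Sraw F L A n m x (eR (rowof i))))"
proof -
  have "affine (card (SBs n :: (('n \<Rightarrow> nat) \<times> nat) set)) (LC TYPE('n) F L A n m eR) zB i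
     = (\<Sum>s\<in>SBs n. (if id i = 1 then 0 else wCrow F L A n m (eR (rowof (id i))) s) * uval n x s) + (if id i = 1 then 0 else bCrow F A n m (eR (rowof (id i))))"
    unfolding LC_def by (rule affine_mkL[OF enc_bij[OF finite_SBs], where v = "uval n x"]) (rule assms)
  then show ?thesis by (auto simp: relu_def Sraw_def)
qed

definition clsS :: "nat \<Rightarrow> ('n::finite \<Rightarrow> nat) set" where "clsS m = PiE UNIV (\<lambda>_::'n. {..<m})"

definition Svf :: "(real^'n \<Rightarrow> real) \<Rightarrow> real \<Rightarrow> real \<Rightarrow> nat \<Rightarrow> nat \<Rightarrow> (nat \<Rightarrow> ('n::finite \<Rightarrow> nat)) \<Rightarrow> real^'n \<Rightarrow> nat \<Rightarrow> real" where
  "Svf F L A n m eR x j = max 0 (Sraw F L A n m x (eR j))"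

definition dimsN :: "'n::finite itself \<Rightarrow> nat \<Rightarrow> nat \<Rightarrow> nat list" where
  "dimsN _ n Nc = [DIM((real^'n) \<times> real), card (SA n :: ('n \<times> nat \<times> bool) set), card (SBs n :: (('n \<Rightarrow> nat) \<times> nat) set)]
     @ replicate Nc (Nc+2) @ [DIM((real^'n) \<times> real)]"

definition layersN :: "'n::finite itself \<Rightarrow> (real^'n \<Rightarrow> real) \<Rightarrow> real \<Rightarrow> real \<Rightarrow> nat \<Rightarrow> nat \<Rightarrow> (nat \<Rightarrow> ('n \<Rightarrow> nat)) \<Rightarrow> nat \<Rightarrow> layer list" where
  "layersN T F L A n m eR Nc = [LA T n, LB T n, LC T F L A n m eR] @ map chainL [1..<Nc] @ [finL (0::real^'n, 1::real) A]"

lemma from_coords_single: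
  assumes "e \<in> (Basis :: 'v::euclidean_space set)"
  shows "(from_coords (\<lambda>i. if basis_enum i = e then V else 0) :: 'v) = V *\<^sub>R e"
proof -
  have "(from_coords (\<lambda>i. if basis_enum i = e then V else 0) :: 'v) = (\<Sum>j<DIM('v). (\<lambda>b. (if b = e then V else 0) *\<^sub>R b) (basis_enum j))"
    unfolding from_coords_def by simp
  also have "\<dots> = (\<Sum>b\<in>Basis. (if b = e then V else 0) *\<^sub>R b)"
    by (rule sum.reindex_bij_betw[OF basis_enum_bij])
  also have "\<dots> = (\<Sum>b\<in>Basis. if b = e then V *\<^sub>R e else 0)"
    by (rule sum.cong) auto
  also have "\<dots> = V *\<^sub>R e" using assms by (subst sum.delta) auto
  finally show ?thesis .
qed

lemma net_eval:
  fixes z :: "(real^'n::finite) \<times> real"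
  assumes Nc: "Nc \<ge> 1"
  shows "mlp_fun (dimsN TYPE('n) n Nc) (layersN TYPE('n) F L A n m eR Nc) z
     = (0, Mx (Svf F L A n m eR (fst z)) (Nc - 1) - A)"
proof -
  let ?D = "DIM((real^'n) \<times> real)"
  let ?x = "fst z"
  define zA where "zA = relu (affine ?D (LA TYPE('n) n) (to_coords z))"
  define zB where "zB = relu (affine (card (SA n :: ('n \<times> nat \<times> bool) set)) (LB TYPE('n) n) zA)"
  define zC where "zC = relu (affine (card (SBs n :: (('n \<Rightarrow> nat) \<times> nat) set)) (LC TYPE('n) F L A n m eR) zB)"
  let ?Sv = "Svf F L A n m eR ?x"
  have hA: "\<And>j. j < card (SA n :: ('n \<times> nat \<times> bool) set) \<Longrightarrow> zA j = aval n ?x (enc (SA n) j)"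
    unfolding zA_def by (rule eval_A)
  have hB: "\<And>j. j < card (SBs n :: (('n \<Rightarrow> nat) \<times> nat) set) \<Longrightarrow> zB j = uval n ?x (enc (SBs n) j)"
    unfolding zB_def by (rule eval_B[OF _ hA])
  have hC: "zC i = (if i = 1 then 0 else ?Sv (rowof i))" for i
    unfolding zC_def Svf_def by (rule eval_C[OF hB])
  have cinv0: "cinv Nc ?Sv 0 zC"
    unfolding cinv_def using hC by (auto simp: rowof_def Svf_def)
  have nn: "\<forall>j. ?Sv j \<ge> 0" by (simp add: Svf_def)
  have ev: "mlp_eval (dimsN TYPE('n) n Nc) (layersN TYPE('n) F L A n m eR Nc) (to_coords z)
      = mlp_eval (replicate (Nc - 1 + 1) (Nc+2) @ [?D]) (map chainL [0+1..<Nc] @ [finL (0::real^'n, 1::real) A]) zC"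
    unfolding dimsN_def layersN_def zC_def zB_def zA_def using Nc
    by (simp add: mlp_eval_cons)
  have "\<forall>i. mlp_eval (replicate (Nc - 1 + 1) (Nc+2) @ [?D]) (map chainL [0+1..<Nc] @ [finL (0::real^'n, 1::real) A]) zC i
      = (if basis_enum i = (0::real^'n, 1::real) then Mx ?Sv (Nc - 1) - A else 0)"
    using chain_tail[OF nn, where e="(0::real^'n, 1::real)" and A=A, rule_format, of 0 "Nc - 1" Nc zC] cinv0 Nc by simp
  then have "mlp_eval (dimsN TYPE('n) n Nc) (layersN TYPE('n) F L A n m eR Nc) (to_coords z)
     = (\<lambda>i. if basis_enum i = (0::real^'n, 1::real) then Mx ?Sv (Nc - 1) - A else 0)"
    using ev by auto
  moreover have "(0::real^'n, 1::real) \<in> Basis" by (simp add: Basis_prod_def)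
  ultimately show ?thesis unfolding mlp_fun_def
    by (simp add: from_coords_single)
qed

definition phi :: "real \<Rightarrow> real \<Rightarrow> real \<Rightarrow> real \<Rightarrow> real" where
  "phi L \<rho> a t = a + (\<Sum>k<3. coefk L \<rho> a k * max 0 (t - real k * \<rho>))"

lemma phi_expand: "phi L \<rho> a t = a - L * max 0 t + (L - (a - L*\<rho>)/\<rho>) * max 0 (t - \<rho>) + ((a - L*\<rho>)/\<rho>) * max 0 (t - 2*\<rho>)"
  by (simp add: phi_def coefk_def numeral_3_eq_3)

lemma psi_props:
  fixes L \<rho> a t \<sigma> :: real
  assumes "L \<ge> 0" "\<rho> > 0" "\<sigma> * \<rho> = a - L*\<rho>" "\<sigma> \<ge> L" "t \<ge> 0"
  defines "\<psi> \<equiv> a - L * max 0 t + (L - \<sigma>) * max 0 (t - \<rho>) + \<sigma> * max 0 (t - 2*\<rho>)"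
  shows "\<psi> \<ge> 0" "\<psi> \<le> max 0 (a - L*t)" "t \<le> \<rho> \<Longrightarrow> \<psi> = a - L*t" "\<psi> \<noteq> 0 \<Longrightarrow> t < 2*\<rho>"
proof -
  consider "t \<le> \<rho>" | "\<rho> < t" "t \<le> 2*\<rho>" | "2*\<rho> < t" by linarith
  then have all: "\<psi> \<ge> 0 \<and> \<psi> \<le> max 0 (a - L*t) \<and> (t \<le> \<rho> \<longrightarrow> \<psi> = a - L*t) \<and> (\<psi> \<noteq> 0 \<longrightarrow> t < 2*\<rho>)"
  proof cases
    case 1
    then have e: "\<psi> = a - L*t" using assms unfolding \<psi>_def by simp
    have "a - L*t \<ge> a - L*\<rho>" using 1 assms(1) by (simp add: mult_left_mono)
    moreover have "a - L*\<rho> \<ge> 0" using assms(3,4,2,1)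
      by (metis mult_right_mono mult_nonneg_nonneg less_imp_le order_trans)
    ultimately show ?thesis using e 1 assms(2) by auto
  next
    case 2
    then have e: "\<psi> = a - L*t + (L - \<sigma>)*(t - \<rho>)" using assms unfolding \<psi>_def by simp
    have e2: "\<psi> = \<sigma> * (2*\<rho> - t)" using e assms(3) by (simp add: algebra_simps)
    have "\<psi> \<ge> 0" using e2 2 assms(1,4) by simp
    moreover have "(L - \<sigma>)*(t - \<rho>) \<le> 0" using 2 assms(4) by (simp add: mult_nonpos_nonneg)
    moreover have "\<psi> \<noteq> 0 \<longrightarrow> t < 2*\<rho>" using e2 2 by (cases "t = 2*\<rho>") auto
    ultimately show ?thesis using e 2 by auto
  next
    case 3
    then have "\<psi> = a - L*t + (L - \<sigma>)*(t - \<rho>) + \<sigma> * (t - 2*\<rho>)" using assms unfolding \<psi>_def by simp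
    also have "\<dots> = 0" using assms(3) by (simp add: algebra_simps)
    finally show ?thesis using 3 assms(2) by auto
  qed
  then show "\<psi> \<ge> 0" "\<psi> \<le> max 0 (a - L*t)" "t \<le> \<rho> \<Longrightarrow> \<psi> = a - L*t" "\<psi> \<noteq> 0 \<Longrightarrow> t < 2*\<rho>" by auto
qed

lemma phi_props:
  fixes L \<rho> a t :: real
  assumes "L \<ge> 0" "\<rho> > 0" "a \<ge> 2*L*\<rho>" "t \<ge> 0"
  shows "phi L \<rho> a t \<ge> 0" "phi L \<rho> a t \<le> max 0 (a - L*t)" "t \<le> \<rho> \<Longrightarrow> phi L \<rho> a t = a - L*t"
    "phi L \<rho> a t \<noteq> 0 \<Longrightarrow> t < 2*\<rho>"
proof -
  let ?\<sigma> = "(a - L*\<rho>)/\<rho>"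
  have s1: "?\<sigma> * \<rho> = a - L*\<rho>" using assms(2) by simp
  have s2: "?\<sigma> \<ge> L" using assms(2,3) by (simp add: field_simps)
  note P = psi_props[OF assms(1,2) s1 s2 assms(4)]
  show "phi L \<rho> a t \<ge> 0" "phi L \<rho> a t \<le> max 0 (a - L*t)" "t \<le> \<rho> \<Longrightarrow> phi L \<rho> a t = a - L*t"
    "phi L \<rho> a t \<noteq> 0 \<Longrightarrow> t < 2*\<rho>"
    using P unfolding phi_expand by auto
qed

lemma Sraw_eq:
  fixes x :: "real^'n::finite"
  shows "Sraw F L A n m x r = (\<Sum>p\<in>gridS n. if cls m p = r then phi L (rhoN n CARD('n)) (alpha F A n p) (Tsum n x p) else 0)"
proof -
  let ?\<rho> = "rhoN n CARD('n)"
  have "(\<Sum>s\<in>SBs n. wCrow F L A n m r s * uval n x s)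
      = (\<Sum>p\<in>gridS n. \<Sum>k\<in>{..<3}. wCrow F L A n m r (p,k) * uval n x (p,k))"
    unfolding SBs_def by (simp add: sum.cartesian_product)
  also have "\<dots> = (\<Sum>p\<in>gridS n. if cls m p = r then (\<Sum>k<3. coefk L ?\<rho> (alpha F A n p) k * max 0 (Tsum n x p - real k * ?\<rho>)) else 0)"
    by (rule sum.cong[OF refl]) (auto simp: wCrow_def uval_def)
  finally show ?thesis unfolding Sraw_def bCrow_def phi_def
    by (simp add: sum.distrib[symmetric] if_distrib add_ac cong: if_cong)
qed

lemma Mx_ge: "j \<le> c \<Longrightarrow> Sv j \<le> Mx Sv c"
proof (induction c)
  case 0 then show ?case by simp
next
  case (Suc c) then show ?case by (cases "j = Suc c") auto
qed

lemma Mx_le: "(\<forall>j\<le>c. Sv j \<le> U) \<Longrightarrow> Mx Sv c \<le> U"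
  by (induction c) auto

lemma Tsum_eq: "Tsum n x p = (\<Sum>i\<in>UNIV. \<bar>x $ i - real (p i) / real n\<bar>)"
  unfolding Tsum_def aval_def by (rule sum.cong) auto

lemma Tsum_nonneg: "Tsum n x p \<ge> 0"
  unfolding Tsum_eq by (rule sum_nonneg) auto

lemma Tsum_ge_comp: "\<bar>x $ i - real (p i) / real n\<bar> \<le> Tsum n x p"
  unfolding Tsum_eq by (rule member_le_sum) auto

lemma Tsum_ge_norm: "norm (x - gp n p) \<le> Tsum n x p"
proof -
  have "norm (x - gp n p) \<le> (\<Sum>i\<in>UNIV. \<bar>(x - gp n p) $ i\<bar>)" by (rule norm_le_l1_cart)
  also have "\<dots> = Tsum n x p" unfolding Tsum_eq by (simp add: gp_def)
  finally show ?thesis .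
qed

lemma sum_le_single:
  fixes g :: "'a \<Rightarrow> real"
  assumes "finite S" "\<forall>p\<in>S. 0 \<le> g p \<and> g p \<le> B" "0 \<le> B"
    "\<forall>p\<in>S. \<forall>q\<in>S. g p \<noteq> 0 \<longrightarrow> g q \<noteq> 0 \<longrightarrow> p = q"
  shows "sum g S \<le> B"
proof (cases "\<exists>p\<in>S. g p \<noteq> 0")
  case False
  then have "sum g S = 0" by simp
  then show ?thesis using assms(3) by simp
next
  case True
  then obtain p0 where p0: "p0 \<in> S" "g p0 \<noteq> 0" by blast
  have "sum g S = g p0 + sum g (S - {p0})" using p0(1) assms(1) by (simp add: sum.remove)
  also have "sum g (S - {p0}) = 0" using assms(4) p0 by (intro sum.neutral) blast
  finally show ?thesis using assms(2) p0 by simp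
qed

lemma mod_dist:
  fixes a b m :: nat
  assumes "a mod m = b mod m" "a \<noteq> b"
  shows "real m \<le> \<bar>real a - real b\<bar>"
proof -
  { fix a b :: nat assume h: "a mod m = b mod m" "a < b"
    then have "m dvd b - a" using mod_eq_dvd_iff_nat[of a b m] by simp
    then have "m \<le> b - a" using h(2) by (simp add: dvd_imp_le)
    then have "real m \<le> \<bar>real a - real b\<bar>" using h(2) by (simp add: of_nat_diff) }
  note * = this
  show ?thesis
  proof (cases "a < b")
    case True then show ?thesis using *[OF assms(1)] by simp
  next
    case False then have "b < a" using assms(2) by simp
    then show ?thesis using *[OF assms(1)[symmetric]] by (simp add: abs_minus_commute)
  qed
qed

lemma gp_cube: "p \<in> gridS n \<Longrightarrow> gp n p \<in> unit_cube"
  unfolding unit_cube_def gp_def gridS_iff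
  by (auto simp: divide_le_eq_1)

lemma approx:
  fixes F :: "real^'n::finite \<Rightarrow> real" and x :: "real^'n" and L A :: real
  assumes L: "L \<ge> 0" and Flip: "\<forall>u v. \<bar>F u - F v\<bar> \<le> L * norm (u - v)"
    and n: "n \<ge> 1" and m: "m = 4 * CARD('n)"
    and HA: "\<forall>y\<in>unit_cube. A + F y \<ge> 2*L*real CARD('n)"
    and eR: "bij_betw eR {..<Nc} (clsS m :: ('n \<Rightarrow> nat) set)"
    and x: "x \<in> unit_cube"
  shows "F x - 2*L*real CARD('n)/real n \<le> Mx (Svf F L A n m eR x) (Nc - 1) - A"
    and "Mx (Svf F L A n m eR x) (Nc - 1) - A \<le> F x"
proof -
  define d where "d = CARD('n)"
  define \<rho> where "\<rho> = rhoN n d"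
  have dpos: "d \<ge> 1" unfolding d_def by (simp add: Suc_leI)
  have \<rho>pos: "\<rho> > 0" unfolding \<rho>_def rhoN_def using dpos n by simp
  have \<rho>le: "\<rho> \<le> d" unfolding \<rho>_def rhoN_def using n by (simp add: divide_le_eq mult_le_cancel_left1 dpos)
  have \<alpha>: "alpha F A n p \<ge> 2*L*\<rho>" if "p \<in> gridS n" for p
  proof -
    have "2*L*\<rho> \<le> 2*L*d" using \<rho>le L by (simp add: mult_left_mono)
    also have "\<dots> \<le> alpha F A n p" unfolding alpha_def d_def using HA gp_cube[OF that] by auto
    finally show ?thesis .
  qed
  have Fx: "A + F x \<ge> 0"
  proof -
    have "0 \<le> 2*L*d" using L by simp
    then show ?thesis using HA x unfolding d_def by force
  qed
  have Fcl: "F (gp n p) \<le> F x + L * Tsum n x p" for p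
  proof -
    have "F (gp n p) - F x \<le> L * norm (x - gp n p)" using Flip[rule_format, of "gp n p" x]
      by (simp add: norm_minus_commute)
    also have "\<dots> \<le> L * Tsum n x p" by (rule mult_left_mono[OF Tsum_ge_norm L])
    finally show ?thesis by simp
  qed
  have Fcl2: "F x \<le> F (gp n p) + L * Tsum n x p" for p
  proof -
    have "F x - F (gp n p) \<le> L * norm (x - gp n p)" using Flip[rule_format, of x "gp n p"] by simp
    also have "\<dots> \<le> L * Tsum n x p" by (rule mult_left_mono[OF Tsum_ge_norm L])
    finally show ?thesis by simp
  qed
  note PH = phi_props[OF L \<rho>pos \<alpha> Tsum_nonneg[of n x]]
  have Sup: "Sraw F L A n m x r \<le> A + F x" for r
  proof -
    define g where "g (p::'n \<Rightarrow> nat) = (if cls m p = r then phi L \<rho> (alpha F A n p) (Tsum n x p) else 0)" for p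
    have "Sraw F L A n m x r = sum g (gridS n)" unfolding Sraw_eq g_def \<rho>_def d_def ..
    also have "\<dots> \<le> A + F x"
    proof (rule sum_le_single[OF finite_gridS _ Fx])
      show "\<forall>p\<in>gridS n. 0 \<le> g p \<and> g p \<le> A + F x"
      proof
        fix p :: "'n \<Rightarrow> nat" assume p: "p \<in> gridS n"
        have "alpha F A n p - L * Tsum n x p \<le> A + F x" using Fcl[of p] unfolding alpha_def by simp
        then show "0 \<le> g p \<and> g p \<le> A + F x" unfolding g_def using PH(1,2)[OF p, of p] Fx by auto
      qed
      show "\<forall>p\<in>gridS n. \<forall>q\<in>gridS n. g p \<noteq> 0 \<longrightarrow> g q \<noteq> 0 \<longrightarrow> p = q"
      proof (intro ballI impI)
        fix p q :: "'n \<Rightarrow> nat" assume p: "p \<in> gridS n" and q: "q \<in> gridS n" and gp: "g p \<noteq> 0" and gq: "g q \<noteq> 0"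
        have cp: "cls m p = r" and cq: "cls m q = r" using gp gq unfolding g_def by (auto split: if_splits)
        have tp: "Tsum n x p < 2*\<rho>" using gp cp PH(4)[OF p, of p] unfolding g_def by auto
        have tq: "Tsum n x q < 2*\<rho>" using gq cq PH(4)[OF q, of q] unfolding g_def by auto
        show "p = q"
        proof (rule ccontr)
          assume "p \<noteq> q"
          then obtain i where i: "p i \<noteq> q i" by auto
          have "p i mod m = q i mod m" using cp cq unfolding cls_def by metis
          then have md: "real m \<le> \<bar>real (p i) - real (q i)\<bar>" using mod_dist i by blast
          have "\<bar>real (p i) / real n - real (q i) / real n\<bar> \<le> \<bar>x $ i - real (p i) / real n\<bar> + \<bar>x $ i - real (q i) / real n\<bar>"
            by linarith
          also have "\<dots> \<le> Tsum n x p + Tsum n x q" using Tsum_ge_comp[of x i p n] Tsum_ge_comp[of x i q n] by linarith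
          also have "\<dots> < 4 * \<rho>" using tp tq by linarith
          finally have "\<bar>real (p i) - real (q i)\<bar> / real n < 4 * \<rho>"
            by (simp add: diff_divide_distrib[symmetric])
          moreover have "4 * \<rho> = real m / real n" unfolding \<rho>_def rhoN_def m d_def by simp
          ultimately have "\<bar>real (p i) - real (q i)\<bar> < real m" using n by (simp add: divide_less_cancel)
          then show False using md by simp
        qed
      qed
    qed
    finally show ?thesis .
  qed
  have "Mx (Svf F L A n m eR x) (Nc - 1) \<le> A + F x"
    by (rule Mx_le) (auto simp: Svf_def Sup Fx)
  then show "Mx (Svf F L A n m eR x) (Nc - 1) - A \<le> F x" by simp
  define p0 :: "'n \<Rightarrow> nat" where "p0 = (\<lambda>i. nat \<lfloor>real n * x $ i\<rfloor>)"
  have xi: "0 \<le> x $ i \<and> x $ i \<le> 1" for i using x unfolding unit_cube_def by auto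
  have p0r: "real (p0 i) = of_int \<lfloor>real n * x $ i\<rfloor>" for i
    unfolding p0_def using xi[of i] by simp
  have p0g: "p0 \<in> gridS n"
    unfolding gridS_iff
  proof
    fix i
    have "of_int \<lfloor>real n * x $ i\<rfloor> \<le> real n * x $ i" by simp
    also have "\<dots> \<le> real n" using xi[of i] by (simp add: mult_left_le)
    finally show "p0 i \<le> n" using p0r[of i] by linarith
  qed
  have cl: "\<bar>x $ i - real (p0 i) / real n\<bar> \<le> 1 / real n" for i
  proof -
    have a: "of_int \<lfloor>real n * x $ i\<rfloor> \<le> real n * x $ i" by simp
    have b: "real n * x $ i < of_int \<lfloor>real n * x $ i\<rfloor> + 1" by linarith
    have "real (p0 i) / real n \<le> x $ i" using a p0r[of i] n by (simp add: divide_le_eq mult.commute)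
    moreover have "x $ i - 1 / real n \<le> real (p0 i) / real n"
    proof -
      have c1: "real n * x $ i - 1 \<le> real (p0 i)" using b p0r[of i] by linarith
      have "x $ i - 1 / real n = (real n * x $ i - 1) / real n" using n by (simp add: field_simps)
      also have "\<dots> \<le> real (p0 i) / real n" using c1 by (simp add: divide_right_mono)
      finally show ?thesis .
    qed
    ultimately show ?thesis by linarith
  qed
  have T0: "Tsum n x p0 \<le> \<rho>"
  proof -
    have "Tsum n x p0 \<le> (\<Sum>i\<in>(UNIV::'n set). 1 / real n)" unfolding Tsum_eq by (rule sum_mono) (rule cl)
    also have "\<dots> = \<rho>" unfolding \<rho>_def rhoN_def d_def by simp
    finally show ?thesis .
  qed
  have phi0: "phi L \<rho> (alpha F A n p0) (Tsum n x p0) \<ge> A + F x - 2*L*\<rho>"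
  proof -
    have "phi L \<rho> (alpha F A n p0) (Tsum n x p0) = alpha F A n p0 - L * Tsum n x p0" using PH(3)[OF p0g T0] .
    moreover have "L * Tsum n x p0 \<le> L * \<rho>" using T0 L by (simp add: mult_left_mono)
    ultimately show ?thesis using Fcl2[of p0] unfolding alpha_def by linarith
  qed
  define r0 where "r0 = cls m p0"
  have mpos: "m > 0" using m dpos d_def by simp
  have r0c: "r0 \<in> clsS m" unfolding r0_def clsS_def cls_def using mpos by (auto simp: PiE_iff)
  then obtain j0 where j0: "j0 < Nc" "eR j0 = r0" using eR unfolding bij_betw_def by (metis imageE lessThan_iff r0c)
  have "phi L \<rho> (alpha F A n p0) (Tsum n x p0) \<le> Sraw F L A n m x r0"
  proof -
    have "phi L \<rho> (alpha F A n p0) (Tsum n x p0) = (if cls m p0 = r0 then phi L \<rho> (alpha F A n p0) (Tsum n x p0) else 0)"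
      unfolding r0_def by simp
    also have "\<dots> \<le> (\<Sum>p\<in>gridS n. if cls m p = r0 then phi L \<rho> (alpha F A n p) (Tsum n x p) else 0)"
      by (rule member_le_sum[OF p0g]) (auto intro: PH(1)[of _ p for p] finite_gridS)
    also have "\<dots> = Sraw F L A n m x r0" unfolding Sraw_eq \<rho>_def d_def ..
    finally show ?thesis .
  qed
  also have "\<dots> \<le> Svf F L A n m eR x j0" unfolding Svf_def j0(2) by simp
  also have "\<dots> \<le> Mx (Svf F L A n m eR x) (Nc - 1)" by (rule Mx_ge) (use j0 in simp)
  finally have "A + F x - 2*L*\<rho> \<le> Mx (Svf F L A n m eR x) (Nc - 1)" using phi0 by linarith
  moreover have "2*L*\<rho> = 2*L*real CARD('n)/real n" unfolding \<rho>_def rhoN_def d_def by simp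
  ultimately show "F x - 2*L*real CARD('n)/real n \<le> Mx (Svf F L A n m eR x) (Nc - 1) - A" by simp
qed

definition lipf :: "('a::metric_space \<Rightarrow> real) \<Rightarrow> bool" where
  "lipf g \<longleftrightarrow> (\<exists>K. K-lipschitz_on UNIV g)"

lemma lipf_const: "lipf (\<lambda>x. c)"
  unfolding lipf_def using lipschitz_on_constant by blast

lemma lipf_add: "lipf f \<Longrightarrow> lipf g \<Longrightarrow> lipf (\<lambda>x. f x + g x)"
  unfolding lipf_def using lipschitz_on_add by blast

lemma lipf_cmult: "lipf f \<Longrightarrow> lipf (\<lambda>x. c * f x)"
  unfolding lipf_def using lipschitz_on_cmult_real by blast

lemma lipf_minus: "lipf f \<Longrightarrow> lipf (\<lambda>x. - f x)"
  unfolding lipf_def using lipschitz_on_minus by blast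

lemma lipf_diff: "lipf f \<Longrightarrow> lipf g \<Longrightarrow> lipf (\<lambda>x. f x - g x)"
  using lipf_add[OF _ lipf_minus[of g]] by simp

lemma lipf_comp: "lipf (\<lambda>x::real^'n::finite. x $ i)"
proof -
  have "1-lipschitz_on UNIV (\<lambda>x::real^'n. x $ i)"
  proof (rule lipschitz_onI)
    fix x y :: "real^'n"
    have "\<bar>(x - y) $ i\<bar> \<le> norm (x - y)" by (rule component_le_norm_cart)
    then show "dist (x $ i) (y $ i) \<le> 1 * dist x y" by (simp add: dist_norm dist_real_def)
  qed simp
  then show ?thesis unfolding lipf_def by blast
qed

lemma lipf_max: "lipf f \<Longrightarrow> lipf g \<Longrightarrow> lipf (\<lambda>x. max (f x) (g x))"
proof -
  assume "lipf f" "lipf g"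
  then obtain K1 K2 where k1: "K1-lipschitz_on UNIV f" and k2: "K2-lipschitz_on UNIV g" unfolding lipf_def by blast
  have "(K1+K2)-lipschitz_on UNIV (\<lambda>x. max (f x) (g x))"
  proof (rule lipschitz_onI)
    fix x y
    have a: "\<bar>f x - f y\<bar> \<le> K1 * dist x y" using lipschitz_onD[OF k1] by (simp add: dist_real_def)
    have b: "\<bar>g x - g y\<bar> \<le> K2 * dist x y" using lipschitz_onD[OF k2] by (simp add: dist_real_def)
    have "\<bar>max (f x) (g x) - max (f y) (g y)\<bar> \<le> \<bar>f x - f y\<bar> + \<bar>g x - g y\<bar>" by (simp add: max_def abs_if)
    then show "dist (max (f x) (g x)) (max (f y) (g y)) \<le> (K1+K2) * dist x y"
      using a b by (simp add: dist_real_def algebra_simps)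
  next
    show "0 \<le> K1 + K2" using lipschitz_on_nonneg[OF k1] lipschitz_on_nonneg[OF k2] by simp
  qed
  then show ?thesis unfolding lipf_def by blast
qed

lemma lipf_sum: "finite S \<Longrightarrow> (\<forall>i\<in>S. lipf (f i)) \<Longrightarrow> lipf (\<lambda>x. \<Sum>i\<in>S. f i x)"
proof (induction S rule: finite_induct)
  case empty then show ?case by (simp add: lipf_const)
next
  case (insert a S) then show ?case by (simp add: lipf_add)
qed

lemma lipf_Mx: "(\<forall>j. lipf (\<lambda>x. Sv x j)) \<Longrightarrow> lipf (\<lambda>x. Mx (Sv x) c)"
  by (induction c) (auto intro: lipf_max)

lemma lipf_G:
  fixes F :: "real^'n::finite \<Rightarrow> real"
  shows "lipf (\<lambda>x. Mx (Svf F L A n m eR x) c - A)"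
proof -
  have av: "lipf (\<lambda>x. aval n x c)" for c :: "'n \<times> nat \<times> bool"
  proof -
    obtain i k s where c: "c = (i,k,s)" by (metis prod_cases3)
    show ?thesis unfolding c aval_def
      by (cases s) (auto intro!: lipf_max lipf_const lipf_diff lipf_comp)
  qed
  have T: "lipf (\<lambda>x. Tsum n x p)" for p :: "'n \<Rightarrow> nat"
    unfolding Tsum_def by (rule lipf_sum) (auto intro!: lipf_add av)
  have U: "lipf (\<lambda>x. uval n x s)" for s :: "('n \<Rightarrow> nat) \<times> nat"
    by (cases s) (auto simp: uval_def intro!: lipf_max lipf_const lipf_diff T)
  have S: "lipf (\<lambda>x. Svf F L A n m eR x j)" for j
    unfolding Svf_def Sraw_def
    by (auto intro!: lipf_max lipf_const lipf_add lipf_sum lipf_cmult U finite_SBs)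
  show ?thesis by (intro lipf_diff lipf_Mx lipf_const) (use S in blast)
qed

lemma lip_vec:
  fixes G :: "'m::finite \<Rightarrow> real^'n::finite \<Rightarrow> real"
  assumes "\<forall>j. lipf (G j)"
  shows "\<exists>K. K-lipschitz_on UNIV (\<lambda>x. \<chi> j. G j x)"
proof -
  obtain K where K: "\<forall>j. (K j)-lipschitz_on UNIV (G j)" using assms unfolding lipf_def by metis
  have "(\<Sum>j\<in>UNIV. K j)-lipschitz_on UNIV (\<lambda>x. \<chi> j. G j x)"
  proof (rule lipschitz_onI)
    fix x y :: "real^'n"
    have "dist (\<chi> j. G j x) (\<chi> j. G j y) \<le> (\<Sum>j\<in>UNIV. \<bar>(\<chi> j. G j x) $ j - (\<chi> j. G j y) $ j\<bar>)"
      unfolding dist_norm using norm_le_l1_cart[of "(\<chi> j. G j x) - (\<chi> j. G j y)"] by simp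
    also have "\<dots> \<le> (\<Sum>j\<in>UNIV. K j * dist x y)"
    proof (rule sum_mono)
      fix j show "\<bar>(\<chi> j. G j x) $ j - (\<chi> j. G j y) $ j\<bar> \<le> K j * dist x y"
        using lipschitz_onD[OF K[rule_format, of j]] by (simp add: dist_real_def)
    qed
    finally show "dist (\<chi> j. G j x) (\<chi> j. G j y) \<le> (\<Sum>j\<in>UNIV. K j) * dist x y"
      by (simp add: sum_distrib_right)
  next
    show "0 \<le> (\<Sum>j\<in>UNIV. K j)" using lipschitz_on_nonneg K by (meson sum_nonneg)
  qed
  then show ?thesis by blast
qed

lemma card_SA: "card (SA n :: ('n::finite \<times> nat \<times> bool) set) = CARD('n) * ((n+1) * 2)"
  unfolding SA_def by (simp add: card_cartesian_product)

lemma card_gridS: "card (gridS n :: ('n::finite \<Rightarrow> nat) set) = (n+1) ^ CARD('n)"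
  unfolding gridS_def by (simp add: card_PiE)

lemma card_SBs: "card (SBs n :: (('n::finite \<Rightarrow> nat) \<times> nat) set) = (n+1) ^ CARD('n) * 3"
  unfolding SBs_def by (simp add: card_cartesian_product card_gridS)

lemma dims_cons: "dimsN TYPE('n::finite) n Nc = DIM((real^'n) \<times> real) # card (SA n :: ('n \<times> nat \<times> bool) set) # card (SBs n :: (('n \<Rightarrow> nat) \<times> nat) set) # (replicate Nc (Nc+2) @ [DIM((real^'n) \<times> real)])"
  unfolding dimsN_def by simp

lemma dims_tail:
  assumes "3 \<le> l" "l < Nc + 4"
  shows "dimsN TYPE('n::finite) n Nc ! l \<le> Nc + 2 + DIM((real^'n) \<times> real)"
proof -
  let ?rest = "replicate Nc (Nc+2) @ [DIM((real^'n) \<times> real)]"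
  obtain l' where l': "l = Suc (Suc (Suc l'))" proof
    show "l = Suc (Suc (Suc (l - 3)))" using assms(1) by simp
  qed
  have "dimsN TYPE('n::finite) n Nc ! l = ?rest ! (l - 3)"
    unfolding dims_cons l' by simp
  moreover have "l - 3 < length ?rest" using assms by simp
  then have "?rest ! (l - 3) \<in> set ?rest" by (rule nth_mem)
  then have "?rest ! (l - 3) \<le> Nc + 2 + DIM((real^'n) \<times> real)" by (auto split: if_splits)
  ultimately show ?thesis by simp
qed

lemma size_nat:
  fixes n Nc :: nat
  assumes Nc: "Nc \<ge> 1"
  defines "X \<equiv> (n+1) ^ (CARD('n::finite) + 1)"
  defines "E \<equiv> Nc + 2 + DIM((real^'n) \<times> real)"
  defines "Q \<equiv> 2*CARD('n)*(DIM((real^'n) \<times> real)+1) + 3*(2*CARD('n)+1) + 4*(Nc+2) + E*E + E"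
  shows "mlp_width (dimsN TYPE('n) n Nc) \<le> (E + 2*CARD('n) + 3) * X"
    and "length layers = Nc + 3 \<Longrightarrow> mlp_nnz (dimsN TYPE('n) n Nc) layers \<le> (Nc + 3) * Q * X"
proof -
  let ?d = "CARD('n)"
  let ?D = "DIM((real^'n) \<times> real)"
  let ?dims = "dimsN TYPE('n) n Nc"
  have X1: "n + 1 \<le> X" unfolding X_def using power_increasing[of 1 "CARD('n)+1" "n+1"] by simp
  have X2: "(n+1)^?d \<le> X" unfolding X_def using power_increasing[of "?d" "CARD('n)+1" "n+1"] by simp
  have Xp: "1 \<le> X" using X1 by simp
  have SA: "card (SA n :: ('n \<times> nat \<times> bool) set) \<le> 2*?d*X"
  proof -
    have "card (SA n :: ('n \<times> nat \<times> bool) set) = 2*?d*(n+1)" by (simp add: card_SA)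
    also have "\<dots> \<le> 2*?d*X" using X1 by (rule mult_left_mono) simp
    finally show ?thesis .
  qed
  have SB: "card (SBs n :: (('n \<Rightarrow> nat) \<times> nat) set) \<le> 3*X"
  proof -
    have "card (SBs n :: (('n \<Rightarrow> nat) \<times> nat) set) = 3*(n+1)^?d" by (simp add: card_SBs)
    also have "\<dots> \<le> 3*X" using X2 by simp
    finally show ?thesis .
  qed
  have "\<forall>a\<in>set ?dims. a \<le> (E + 2*?d + 3) * X"
  proof
    fix a assume "a \<in> set ?dims"
    then have "a = ?D \<or> a = card (SA n :: ('n \<times> nat \<times> bool) set) \<or> a = card (SBs n :: (('n \<Rightarrow> nat) \<times> nat) set) \<or> a = Nc + 2"
      unfolding dims_cons by (auto split: if_splits)
    moreover have "E * X \<le> (E + 2*?d + 3) * X" "2*?d*X \<le> (E + 2*?d + 3) * X" "3*X \<le> (E + 2*?d + 3) * X"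
      by (simp_all add: mult_right_mono)
    moreover have "?D \<le> E * X" "Nc + 2 \<le> E * X" unfolding E_def using Xp
      by (metis le_add2 le_trans mult.right_neutral mult_le_mono2, metis le_add1 le_trans mult.right_neutral mult_le_mono2)
    ultimately show "a \<le> (E + 2*?d + 3) * X" using SA SB by linarith
  qed
  then show "mlp_width ?dims \<le> (E + 2*?d + 3) * X"
    unfolding mlp_width_def by (subst Max_le_iff) (auto simp: dims_cons)
  assume len: "length layers = Nc + 3"
  have trm: "?dims ! (l+1) * ?dims ! l + ?dims ! (l+1) \<le> Q * X" if l: "l < Nc + 3" for l
  proof -
    consider "l = 0" | "l = 1" | "l = 2" | "3 \<le> l" by linarith
    then show ?thesis
    proof cases
      case 1
      then have "?dims ! (l+1) * ?dims ! l + ?dims ! (l+1) = card (SA n :: ('n \<times> nat \<times> bool) set) * (?D + 1)"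
        by (simp add: dimsN_def)
      also have "\<dots> \<le> 2*?d*X * (?D+1)" using SA by (rule mult_right_mono) simp
      also have "\<dots> \<le> Q * X" unfolding Q_def by (simp add: algebra_simps)
      finally show ?thesis .
    next
      case 2
      then have "?dims ! (l+1) * ?dims ! l + ?dims ! (l+1) = card (SBs n :: (('n \<Rightarrow> nat) \<times> nat) set) * (card (SA n :: ('n \<times> nat \<times> bool) set) + 1)"
        by (simp add: dimsN_def)
      also have "\<dots> = (n+1)^?d * 3 * (?d * ((n+1)*2) + 1)" by (simp add: card_SA card_SBs)
      also have "\<dots> \<le> (n+1)^?d * 3 * ((2*?d+1) * (n+1))" by (rule mult_left_mono) (auto simp: algebra_simps)
      also have "\<dots> = 3*(2*?d+1) * X" unfolding X_def by (simp add: algebra_simps)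
      also have "\<dots> \<le> Q * X" unfolding Q_def by (simp add: mult_right_mono)
      finally show ?thesis .
    next
      case 3
      then have "?dims ! (l+1) * ?dims ! l + ?dims ! (l+1) = (Nc + 2) * (card (SBs n :: (('n \<Rightarrow> nat) \<times> nat) set) + 1)"
        using Nc by (simp add: dimsN_def nth_append algebra_simps)
      also have "\<dots> \<le> (Nc+2) * (4*X)" using SB Xp by (intro mult_left_mono) auto
      also have "\<dots> \<le> Q * X" unfolding Q_def by (simp add: algebra_simps)
      finally show ?thesis .
    next
      case 4
      have a: "?dims ! l \<le> E" unfolding E_def by (rule dims_tail) (use 4 l in auto)
      have b: "?dims ! (l+1) \<le> E" unfolding E_def by (rule dims_tail) (use 4 l in auto)
      have "?dims ! (l+1) * ?dims ! l + ?dims ! (l+1) \<le> E * E + E" using a b by (simp add: add_mono mult_le_mono)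
      also have "\<dots> \<le> Q" unfolding Q_def by simp
      also have "\<dots> \<le> Q * X" using Xp by simp
      finally show ?thesis .
    qed
  qed
  have "mlp_nnz ?dims layers \<le> (\<Sum>l<length layers. ?dims ! (l+1) * ?dims ! l + ?dims ! (l+1))" by (rule nnz_le)
  also have "\<dots> \<le> (\<Sum>l<Nc+3. Q * X)" unfolding len by (rule sum_mono) (use trm in auto)
  also have "\<dots> = (Nc + 3) * Q * X" by simp
  finally show "mlp_nnz ?dims layers \<le> (Nc + 3) * Q * X" .
qed

lemma flow_const:
  fixes G :: "'a::real_normed_vector \<Rightarrow> real"
  shows "flow (\<lambda>z. (0, G (fst z))) (x, 0) = (x, G x)"
proof -
  let ?V = "\<lambda>z::'a \<times> real. (0::'a, G (fst z))"
  have ex: "\<exists>\<gamma>. \<gamma> 0 = (x,0) \<and> (\<forall>t\<in>{0..1}. (\<gamma> has_vector_derivative ?V (\<gamma> t)) (at t within {0..1})) \<and> \<gamma> 1 = (x, G x)"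
  proof (intro exI[of _ "\<lambda>t. (x, t * G x)"] conjI ballI)
    fix t :: real
    show "((\<lambda>t. (x, t * G x)) has_vector_derivative ?V (x, t * G x)) (at t within {0..1})"
      by (auto intro!: has_vector_derivative_Pair derivative_eq_intros)
  qed auto
  have uniq: "\<gamma> 1 = (x, G x)" if g0: "\<gamma> 0 = (x,0)" and gd: "\<forall>t\<in>{0..1}. (\<gamma> has_vector_derivative ?V (\<gamma> t)) (at t within {0..1})" for \<gamma>
  proof -
    have d1: "((\<lambda>t. fst (\<gamma> t)) has_vector_derivative 0) (at t within {0..1})" if "t \<in> {0..1}" for t
    proof -
      have "(\<gamma> has_derivative (\<lambda>h. h *\<^sub>R ?V (\<gamma> t))) (at t within {0..1})"
        using gd that by (simp add: has_vector_derivative_def)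
      from has_derivative_fst[OF this] show ?thesis
        by (simp add: has_vector_derivative_def)
    qed
    obtain c where c: "\<And>t. t \<in> {0..1} \<Longrightarrow> fst (\<gamma> t) = c"
      using has_vector_derivative_zero_constant[of "{0..1::real}" "\<lambda>t. fst (\<gamma> t)"] d1 by blast
    have cx: "c = x" using c[of 0] g0 by simp
    have d2: "((\<lambda>t. snd (\<gamma> t) - t * G x) has_vector_derivative 0) (at t within {0..1})" if "t \<in> {0..1}" for t
    proof -
      have "(\<gamma> has_derivative (\<lambda>h. h *\<^sub>R ?V (\<gamma> t))) (at t within {0..1})"
        using gd that by (simp add: has_vector_derivative_def)
      from has_derivative_snd[OF this] have "((\<lambda>t. snd (\<gamma> t)) has_vector_derivative G x) (at t within {0..1})"
        using c[OF that] cx by (simp add: has_vector_derivative_def)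
      then show ?thesis
        by (auto intro!: derivative_eq_intros)
    qed
    obtain e where e: "\<And>t. t \<in> {0..1} \<Longrightarrow> snd (\<gamma> t) - t * G x = e"
      using has_vector_derivative_zero_constant[of "{0..1::real}" "\<lambda>t. snd (\<gamma> t) - t * G x"] d2 by blast
    have "snd (\<gamma> 1) - G x = snd (\<gamma> 0) - 0" using e[of 1] e[of 0] by simp
    then have "snd (\<gamma> 1) = G x" using g0 by simp
    moreover have "fst (\<gamma> 1) = x" using c[of 1] cx by simp
    ultimately show ?thesis by (metis prod.collapse)
  qed
  show ?thesis
    unfolding flow_def
  proof (rule the_equality)
    show "\<exists>\<gamma>. \<gamma> 0 = (x, 0) \<and> (\<forall>t\<in>{0..1}. (\<gamma> has_vector_derivative ?V (\<gamma> t)) (at t within {0..1})) \<and> \<gamma> 1 = (x, G x)"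
      using ex .
  next
    fix y assume "\<exists>\<gamma>. \<gamma> 0 = (x, 0) \<and> (\<forall>t\<in>{0..1}. (\<gamma> has_vector_derivative ?V (\<gamma> t)) (at t within {0..1})) \<and> \<gamma> 1 = y"
    then show "y = (x, G x)" using uniq by blast
  qed
qed

lemma pow_bound:
  fixes n d K :: nat
  assumes "n \<ge> 1" "d \<ge> 1"
  shows "real (K * (n+1)^(d+1)) \<le> real K * 2^(d+1) * real d * real n^(d+1)"
proof -
  have "(n+1)^(d+1) \<le> (2*n)^(d+1)" using assms(1) by (intro power_mono) auto
  then have "real ((n+1)^(d+1)) \<le> 2^(d+1) * real n^(d+1)"
    by (metis of_nat_le_iff of_nat_mult of_nat_numeral of_nat_power power_mult_distrib)
  then have "real (K * (n+1)^(d+1)) \<le> real K * (2^(d+1) * real n^(d+1))"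
    by (simp add: mult_left_mono)
  also have "\<dots> \<le> real K * (2^(d+1) * real n^(d+1)) * real d"
    using mult_left_mono[of 1 "real d" "real K * (2^(d+1) * real n^(d+1))"] assms(2) by simp
  finally show ?thesis by (simp add: algebra_simps)
qed

theorem corollary12:
  fixes f :: "real^'n \<Rightarrow> real^'m" and L :: real
  assumes "L \<ge> 0" and "L-lipschitz_on UNIV f"
  shows "\<exists>C>0. \<exists>cw cd cp. \<forall>n::nat. n > 0 \<longrightarrow>
    (\<exists>\<Phi> :: 'm \<Rightarrow> ((real^'n) \<times> real \<Rightarrow> (real^'n) \<times> real).
      (\<forall>i. \<exists>dims layers. relu_mlp_arch TYPE((real^'n) \<times> real) dims layers
           \<and> \<Phi> i = mlp_fun dims layers
           \<and> real (mlp_width dims) \<le> cw * real CARD('n) * real n ^ (CARD('n) + 1)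
           \<and> real (mlp_depth layers) \<le> cd * (1 + log 2 (real CARD('n)))
           \<and> real (mlp_nnz dims layers) \<le> cp * real CARD('n) * real n ^ (CARD('n) + 1))
      \<and> (let \<Psi> = (\<lambda>x. \<chi> i. proj_last (flow (\<Phi> i) (iota x)))
         in (\<forall>j. \<forall>x\<in>unit_cube. \<bar>f x $ j - \<Psi> x $ j\<bar> \<le> C / real n)
            \<and> (\<exists>K. K-lipschitz_on UNIV \<Psi>)))"
proof -
  define d where "d = CARD('n)"
  define D where "D = DIM((real^'n) \<times> real)"
  define m where "m = 4*d"
  define Rs where "Rs = (clsS m :: ('n \<Rightarrow> nat) set)"
  define Nc where "Nc = card Rs"
  define eR where "eR = enc Rs"
  define A where "A = norm (f 0) + 3*L*real d"
  define E where "E = Nc + 2 + D"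
  define Q where "Q = 2*d*(D+1) + 3*(2*d+1) + 4*(Nc+2) + E*E + E"
  define C where "C = 2*L*real d + 1"
  define cw where "cw = real (E + 2*d + 3) * 2^(d+1)"
  define cdd where "cdd = real (Nc + 3)"
  define cp where "cp = real ((Nc+3)*Q) * 2^(d+1)"
  have d1: "d \<ge> 1" unfolding d_def by (simp add: Suc_leI)
  have mpos: "m > 0" unfolding m_def using d1 by simp
  have finR: "finite Rs" unfolding Rs_def clsS_def by (simp add: finite_PiE)
  have "(\<lambda>_. 0) \<in> Rs" unfolding Rs_def clsS_def using mpos by (auto simp: PiE_iff)
  then have "Nc > 0" unfolding Nc_def using finR by (auto simp: card_gt_0_iff)
  then have Nc1: "Nc \<ge> 1" by simp
  have eRb: "bij_betw eR {..<Nc} (clsS m)" using enc_bij[OF finR] unfolding eR_def Nc_def Rs_def .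
  have Flip: "\<forall>u v. \<bar>f u $ j - f v $ j\<bar> \<le> L * norm (u - v)" for j
  proof (intro allI)
    fix u v
    have "\<bar>f u $ j - f v $ j\<bar> = \<bar>(f u - f v) $ j\<bar>" by simp
    also have "\<dots> \<le> norm (f u - f v)" by (rule component_le_norm_cart)
    also have "\<dots> \<le> L * norm (u - v)" using lipschitz_onD[OF assms(2), of u v] by (simp add: dist_norm)
    finally show "\<bar>f u $ j - f v $ j\<bar> \<le> L * norm (u - v)" .
  qed
  have HA: "\<forall>y\<in>unit_cube. A + f y $ j \<ge> 2*L*real CARD('n)" for j
  proof
    fix y :: "real^'n" assume y: "y \<in> unit_cube"
    have ny: "norm y \<le> real d"
    proof -
      have "norm y \<le> (\<Sum>i\<in>UNIV. \<bar>y $ i\<bar>)" by (rule norm_le_l1_cart)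
      also have "\<dots> \<le> (\<Sum>i\<in>(UNIV::'n set). 1)" using y unfolding unit_cube_def by (intro sum_mono) auto
      finally show ?thesis unfolding d_def by simp
    qed
    have "\<bar>f y $ j\<bar> \<le> norm (f y)" by (rule component_le_norm_cart)
    also have "\<dots> \<le> norm (f 0) + norm (f y - f 0)" by (rule norm_triangle_sub)
    also have "norm (f y - f 0) \<le> L * norm y" using lipschitz_onD[OF assms(2), of y 0] by (simp add: dist_norm)
    also have "L * norm y \<le> L * real d" using ny assms(1) by (simp add: mult_left_mono)
    finally have "\<bar>f y $ j\<bar> \<le> norm (f 0) + L * real d" by simp
    then show "A + f y $ j \<ge> 2*L*real CARD('n)" unfolding A_def d_def by linarith
  qed
  have "0 \<le> 2*L*real d" using assms(1) by simp
  then have Cpos: "C > 0" unfolding C_def by linarith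
  show ?thesis
  proof (rule exI[of _ C], rule conjI, fact Cpos, rule exI[of _ cw], rule exI[of _ cdd], rule exI[of _ cp], intro allI impI)
    fix n :: nat assume "n > 0"
    then have n1: "n \<ge> 1" by simp
    define G :: "'m \<Rightarrow> real^'n \<Rightarrow> real" where "G i x = Mx (Svf (\<lambda>x. f x $ i) L A n m eR x) (Nc - 1) - A" for i x
    define \<Phi> :: "'m \<Rightarrow> ((real^'n) \<times> real \<Rightarrow> (real^'n) \<times> real)" where "\<Phi> i = mlp_fun (dimsN TYPE('n) n Nc) (layersN TYPE('n) (\<lambda>x. f x $ i) L A n m eR Nc)" for i
    have \<Phi>eq: "\<Phi> i = (\<lambda>z. (0, G i (fst z)))" for i
      unfolding \<Phi>_def G_def by (rule ext) (rule net_eval[OF Nc1])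
    have \<Psi>eq: "(\<lambda>x. \<chi> i. proj_last (flow (\<Phi> i) (iota x))) = (\<lambda>x. \<chi> i. G i x)"
      unfolding \<Phi>eq iota_def proj_last_def by (simp add: flow_const)
    show "\<exists>\<Phi> :: 'm \<Rightarrow> ((real^'n) \<times> real \<Rightarrow> (real^'n) \<times> real).
      (\<forall>i. \<exists>dims layers. relu_mlp_arch TYPE((real^'n) \<times> real) dims layers
           \<and> \<Phi> i = mlp_fun dims layers
           \<and> real (mlp_width dims) \<le> cw * real CARD('n) * real n ^ (CARD('n) + 1)
           \<and> real (mlp_depth layers) \<le> cdd * (1 + log 2 (real CARD('n)))
           \<and> real (mlp_nnz dims layers) \<le> cp * real CARD('n) * real n ^ (CARD('n) + 1))
      \<and> (let \<Psi> = (\<lambda>x. \<chi> i. proj_last (flow (\<Phi> i) (iota x)))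
         in (\<forall>j. \<forall>x\<in>unit_cube. \<bar>f x $ j - \<Psi> x $ j\<bar> \<le> C / real n)
            \<and> (\<exists>K. K-lipschitz_on UNIV \<Psi>))"
    proof (intro exI[of _ \<Phi>] conjI allI)
      fix i
      let ?dims = "dimsN TYPE('n) n Nc"
      let ?lay = "layersN TYPE('n) (\<lambda>x. f x $ i) L A n m eR Nc"
      have len: "length ?lay = Nc + 3" unfolding layersN_def using Nc1 by simp
      have arch: "relu_mlp_arch TYPE((real^'n) \<times> real) ?dims ?lay"
        unfolding relu_mlp_arch_def using len by (simp add: dims_cons layersN_def)
      have w: "real (mlp_width ?dims) \<le> cw * real CARD('n) * real n ^ (CARD('n) + 1)"
      proof -
        have "mlp_width ?dims \<le> (E + 2*d + 3) * (n+1)^(d+1)"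
          using size_nat(1)[OF Nc1, of n] unfolding E_def D_def d_def .
        then have "real (mlp_width ?dims) \<le> real ((E + 2*d + 3) * (n+1)^(d+1))" by linarith
        also have "\<dots> \<le> cw * real d * real n ^ (d + 1)" unfolding cw_def by (rule pow_bound[OF n1 d1])
        finally show ?thesis unfolding d_def .
      qed
      have dp: "real (mlp_depth ?lay) \<le> cdd * (1 + log 2 (real CARD('n)))"
      proof -
        have "log 2 (real CARD('n)) \<ge> 0" using d1 unfolding d_def by simp
        then have "cdd \<le> cdd * (1 + log 2 (real CARD('n)))" unfolding cdd_def by (simp add: mult_le_cancel_left1)
        then show ?thesis unfolding mlp_depth_def len cdd_def by simp
      qed
      have nz: "real (mlp_nnz ?dims ?lay) \<le> cp * real CARD('n) * real n ^ (CARD('n) + 1)"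
      proof -
        have "mlp_nnz ?dims ?lay \<le> (Nc + 3) * Q * (n+1)^(d+1)"
          using size_nat(2)[OF Nc1 len] unfolding Q_def E_def D_def d_def .
        then have "real (mlp_nnz ?dims ?lay) \<le> real ((Nc + 3) * Q * (n+1)^(d+1))" by linarith
        also have "\<dots> \<le> cp * real d * real n ^ (d + 1)" unfolding cp_def by (rule pow_bound[OF n1 d1])
        finally show ?thesis unfolding d_def .
      qed
      show "\<exists>dims layers. relu_mlp_arch TYPE((real^'n) \<times> real) dims layers
           \<and> \<Phi> i = mlp_fun dims layers
           \<and> real (mlp_width dims) \<le> cw * real CARD('n) * real n ^ (CARD('n) + 1)
           \<and> real (mlp_depth layers) \<le> cdd * (1 + log 2 (real CARD('n)))
           \<and> real (mlp_nnz dims layers) \<le> cp * real CARD('n) * real n ^ (CARD('n) + 1)"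
        using arch w dp nz unfolding \<Phi>_def by blast
    next
      have ap: "\<bar>f x $ j - G j x\<bar> \<le> C / real n" if x: "x \<in> unit_cube" for j x
      proof -
        have m': "m = 4 * CARD('n)" unfolding m_def d_def ..
        note a1 = approx(1)[OF assms(1) Flip[of j] n1 m' HA[of j] eRb x]
        note a2 = approx(2)[OF assms(1) Flip[of j] n1 m' HA[of j] eRb x]
        have "2*L*real CARD('n)/real n \<le> C / real n" unfolding C_def d_def
          by (simp add: divide_right_mono)
        then show ?thesis using a1 a2 unfolding G_def by linarith
      qed
      have lp: "\<exists>K. K-lipschitz_on UNIV (\<lambda>x. \<chi> i. G i x)"
        by (rule lip_vec) (auto simp: G_def intro: lipf_G)
      show "let \<Psi> = (\<lambda>x. \<chi> i. proj_last (flow (\<Phi> i) (iota x)))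
         in (\<forall>j. \<forall>x\<in>unit_cube. \<bar>f x $ j - \<Psi> x $ j\<bar> \<le> C / real n)
            \<and> (\<exists>K. K-lipschitz_on UNIV \<Psi>)"
        unfolding Let_def \<Psi>eq using ap lp by simp
    qed
  qed
qed

end
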